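(* Fix $p_0\in PH$. For each $n\in\mathbb N$ let $(p_n,q_n):[-n,0]\to PH\times QH$ be a (mild) solution of $$\frac{dp}{dt}+Ap=PF(p+q),\qquad \frac{dq}{dt}+Aq=QF(p+q)$$ on $[-n,0]$ with $p_n(0)=p_0$ and $q_n(-n)=0$. Then there is a subsequence $(p_{n_k},q_{n_k})$ which converges uniformly on every compact subset of $(-\infty,0]$ to a function $(p,q)$, and $u(t)=p(t)+q(t)$, $t\in(-\infty,0]$, is a solution of $u_t+Au=F(u)$ on $(-\infty,0]$ whose $Q$-component $q(t)$ is bounded on $(-\infty,0]$, with $p(0)=\lim_{k\to\infty}p_{n_k}(0)$ and $q(0)=\lim_{k\to\infty}q_{n_k}(0)$.
   Context: Standing assumptions: $H$ is a real Hilbert space with norm $|\cdot|$. $A$ is a linear, closed, unbounded, positive self-adjoint operator on $H$ with compact inverse, so $H$ has an orthonormal basis of eigenvectors of $A$ with eigenvalues $0<\lambda_1<\lambda_2\le\cdots\le\lambda_N<\lambda_{N+1}\le\cdots\to\infty$ (counted with multiplicity). $F:H\to H$ satisfies $|F(u)|\le K_0$ and $|F(u)-F(v)|\le K_1|u-v|$ for all $u,v\in H$, with constants $K_0,K_1>0$ and $K_1<\lambda_{N+1}$; moreover there is $R>0$ with $F(u)=0$ whenever $|u|\ge R$. $P$ is the orthogonal (spectral) projection onto the span of the first $N$ eigenvectors of $A$, and $Q=I-P$; every $u\in H$ is written $u=p+q$ with $p=Pu\in PH$, $q=Qu\in QH$. A solution on an interval $J$ means a continuous function satisfying the variation of constants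 formula $u(t)=e^{-A(t-s)}u(s)+\int_s^t e^{-A(t-\tau)}F(u(\tau))\,d\tau$ for all $s\le t$ in $J$. *)

theory Defs
  imports "HOL-Analysis.Analysis"
begin

text \<open>The operator A (closed, positive, self-adjoint, compact inverse) is represented by its
  spectral data: an orthonormal basis e 0, e 1, ... of eigenvectors with eigenvalues
  lam 0, lam 1, ... (0-indexed, so lam k is the paper's lambda_(k+1)), A e k = lam k e k.\<close>

definition orthonormal_basis :: "(nat \<Rightarrow> 'a::{real_inner,complete_space}) \<Rightarrow> bool" where
  "orthonormal_basis e \<longleftrightarrow>
     (\<forall>j k. e j \<bullet> e k = (if j = k then 1 else 0)) \<and>
     (\<forall>u. (\<lambda>n. \<Sum>k<n. (u \<bullet> e k) *\<^sub>R e k) \<longlonglongrightarrow> u)"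

definition spectral_data :: "(nat \<Rightarrow> 'a::{real_inner,complete_space}) \<Rightarrow> (nat \<Rightarrow> real) \<Rightarrow> nat \<Rightarrow> bool" where
  "spectral_data e lam N \<longleftrightarrow> orthonormal_basis e \<and> 0 < lam 0 \<and> lam 0 < lam 1 \<and> mono lam \<and>
     filterlim lam at_top sequentially \<and> N \<ge> 1 \<and> lam (N - 1) < lam N"

definition semigroup :: "(nat \<Rightarrow> 'a::{real_inner,complete_space}) \<Rightarrow> (nat \<Rightarrow> real) \<Rightarrow> real \<Rightarrow> 'a \<Rightarrow> 'a" where
  "semigroup e lam t u = (\<Sum>k. (exp (- lam k * t) * (u \<bullet> e k)) *\<^sub>R e k)"

definition Pproj :: "(nat \<Rightarrow> 'a::{real_inner,complete_space}) \<Rightarrow> nat \<Rightarrow> 'a \<Rightarrow> 'a" where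
  "Pproj e N u = (\<Sum>k<N. (u \<bullet> e k) *\<^sub>R e k)"

definition Qproj :: "(nat \<Rightarrow> 'a::{real_inner,complete_space}) \<Rightarrow> nat \<Rightarrow> 'a \<Rightarrow> 'a" where
  "Qproj e N u = u - Pproj e N u"

definition nonlinearity :: "(nat \<Rightarrow> real) \<Rightarrow> nat \<Rightarrow> ('a::real_normed_vector \<Rightarrow> 'a) \<Rightarrow> real \<Rightarrow> real \<Rightarrow> real \<Rightarrow> bool" where
  "nonlinearity lam N F K0 K1 R \<longleftrightarrow> K0 > 0 \<and> K1 > 0 \<and> K1 < lam N \<and> R > 0 \<and>
     (\<forall>u. norm (F u) \<le> K0) \<and> (\<forall>u v. norm (F u - F v) \<le> K1 * norm (u - v)) \<and>
     (\<forall>u. norm u \<ge> R \<longrightarrow> F u = 0)"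

text \<open>Mild solution of u_t + A u = F(u) on the interval J (variation of constants formula).\<close>
definition mild_solution :: "(nat \<Rightarrow> 'a::{real_inner,complete_space}) \<Rightarrow> (nat \<Rightarrow> real) \<Rightarrow> ('a \<Rightarrow> 'a)
    \<Rightarrow> real set \<Rightarrow> (real \<Rightarrow> 'a) \<Rightarrow> bool" where
  "mild_solution e lam F J u \<longleftrightarrow> continuous_on J u \<and>
     (\<forall>s\<in>J. \<forall>t\<in>J. s \<le> t \<longrightarrow>
        ((\<lambda>\<tau>. semigroup e lam (t - \<tau>) (F (u \<tau>))) has_integral
           (u t - semigroup e lam (t - s) (u s))) {s..t})"

definition mild_solution_PQ :: "(nat \<Rightarrow> 'a::{real_inner,complete_space}) \<Rightarrow> (nat \<Rightarrow> real) \<Rightarrow> nat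
    \<Rightarrow> ('a \<Rightarrow> 'a) \<Rightarrow> real set \<Rightarrow> (real \<Rightarrow> 'a) \<Rightarrow> (real \<Rightarrow> 'a) \<Rightarrow> bool" where
  "mild_solution_PQ e lam N F J p q \<longleftrightarrow>
     (\<forall>t\<in>J. Pproj e N (p t) = p t \<and> Qproj e N (q t) = q t) \<and>
     continuous_on J p \<and> continuous_on J q \<and>
     (\<forall>s\<in>J. \<forall>t\<in>J. s \<le> t \<longrightarrow>
        ((\<lambda>\<tau>. semigroup e lam (t - \<tau>) (Pproj e N (F (p \<tau> + q \<tau>)))) has_integral
           (p t - semigroup e lam (t - s) (p s))) {s..t} \<and>
        ((\<lambda>\<tau>. semigroup e lam (t - \<tau>) (Qproj e N (F (p \<tau> + q \<tau>)))) has_integral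
           (q t - semigroup e lam (t - s) (q s))) {s..t})"

end

theory Submission
  imports Defs "HOL-Complex_Analysis.Great_Picard"
begin


lemma summable_Cauchy_cs:
  fixes f :: "nat \<Rightarrow> 'a::{real_normed_vector,complete_space}"
  assumes r: "\<And>e. e > 0 \<Longrightarrow> \<exists>N. \<forall>m\<ge>N. \<forall>n. norm (sum f {m..<n}) < e"
  shows "summable f"
  unfolding summable_iff_convergent Cauchy_convergent_iff [symmetric] Cauchy_iff
proof clarify
  fix e :: real
  assume "0 < e"
  with r obtain N where N: "\<And>m n. m \<ge> N \<Longrightarrow> norm (sum f {m..<n}) < e"
    by blast
  have "norm (sum f {..<m} - sum f {..<n}) < e" if "m\<ge>N" "n\<ge>N" for m n
  proof (cases m n rule: linorder_class.le_cases)
    assume "m \<le> n"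
    then show ?thesis
      by (metis N finite_lessThan lessThan_minus_lessThan lessThan_subset_iff norm_minus_commute sum_diff \<open>m\<ge>N\<close>)
  next
    assume "n \<le> m"
    then show ?thesis
      by (metis N finite_lessThan lessThan_minus_lessThan lessThan_subset_iff sum_diff \<open>n\<ge>N\<close>)
  qed
  then show "\<exists>M. \<forall>m\<ge>M. \<forall>n\<ge>M. norm (sum f {..<m} - sum f {..<n}) < e"
    by blast
qed

locale onb =
  fixes e :: "nat \<Rightarrow> 'a::{real_inner,complete_space}"
  assumes onb: "orthonormal_basis e"
begin

lemma ortho: "e j \<bullet> e k = (if j = k then 1 else 0)"
  using onb unfolding orthonormal_basis_def by blast

lemma norm_e[simp]: "norm (e k) = 1"
  using ortho[of k k] by (simp add: norm_eq_sqrt_inner)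

lemma expand: "(\<lambda>n. \<Sum>k<n. (u \<bullet> e k) *\<^sub>R e k) \<longlonglongrightarrow> u"
  using onb unfolding orthonormal_basis_def by blast

lemma coord_sum: "finite A \<Longrightarrow> (\<Sum>k\<in>A. a k *\<^sub>R e k) \<bullet> e j = (if j \<in> A then a j else 0)"
  by (simp add: inner_sum_left ortho if_distrib cong: if_cong)

lemma coord_sum': "finite A \<Longrightarrow> e j \<bullet> (\<Sum>k\<in>A. a k *\<^sub>R e k) = (if j \<in> A then a j else 0)"
  using coord_sum[of A a j] by (simp add: inner_commute)

lemma norm2_sum: "finite A \<Longrightarrow> (norm (\<Sum>k\<in>A. a k *\<^sub>R e k))\<^sup>2 = (\<Sum>k\<in>A. (a k)\<^sup>2)"
proof -
  assume A: "finite A"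
  have "(norm (\<Sum>k\<in>A. a k *\<^sub>R e k))\<^sup>2 = (\<Sum>k\<in>A. a k *\<^sub>R e k) \<bullet> (\<Sum>k\<in>A. a k *\<^sub>R e k)"
    by (simp add: power2_norm_eq_inner)
  also have "\<dots> = (\<Sum>j\<in>A. a j * (e j \<bullet> (\<Sum>k\<in>A. a k *\<^sub>R e k)))"
    by (simp only: inner_sum_left inner_scaleR_left)
  also have "\<dots> = (\<Sum>j\<in>A. (a j)\<^sup>2)"
    using A by (intro sum.cong) (auto simp: coord_sum' power2_eq_square)
  finally show ?thesis .
qed

lemma parseval: "(\<lambda>k. (u \<bullet> e k)\<^sup>2) sums (norm u)\<^sup>2"
proof -
  have "(\<lambda>n. (norm (\<Sum>k<n. (u \<bullet> e k) *\<^sub>R e k))\<^sup>2) \<longlonglongrightarrow> (norm u)\<^sup>2"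
    by (intro tendsto_intros expand)
  then show ?thesis
    unfolding sums_def by (simp add: norm2_sum)
qed

lemma coord_eq: "(\<And>k. u \<bullet> e k = v \<bullet> e k) \<Longrightarrow> u = v"
proof -
  assume h: "\<And>k. u \<bullet> e k = v \<bullet> e k"
  have "(\<lambda>k. ((u - v) \<bullet> e k)\<^sup>2) sums (norm (u - v))\<^sup>2" by (rule parseval)
  moreover have "(\<lambda>k. ((u - v) \<bullet> e k)\<^sup>2) = (\<lambda>k. 0)" using h by (simp add: inner_diff_left)
  ultimately have "(norm (u - v))\<^sup>2 = 0" using sums_unique2 sums_zero by metis
  then show ?thesis by simp
qed

lemma synth:
  assumes s: "summable (\<lambda>k. (a k)\<^sup>2)"
  shows "summable (\<lambda>k. a k *\<^sub>R e k)" "(\<Sum>k. a k *\<^sub>R e k) \<bullet> e j = a j"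
proof -
  show sm: "summable (\<lambda>k. a k *\<^sub>R e k)"
  proof (rule summable_Cauchy_cs)
    fix r :: real assume r: "r > 0"
    then have "r\<^sup>2 > 0" by simp
    then obtain M where M: "\<And>m n. m \<ge> M \<Longrightarrow> norm (sum (\<lambda>k. (a k)\<^sup>2) {m..<n}) < r\<^sup>2"
      using s unfolding summable_Cauchy by blast
    show "\<exists>M. \<forall>m\<ge>M. \<forall>n. norm (\<Sum>k = m..<n. a k *\<^sub>R e k) < r"
    proof (intro exI allI impI)
      fix m n assume "m \<ge> M"
      then have "(norm (\<Sum>k = m..<n. a k *\<^sub>R e k))\<^sup>2 < r\<^sup>2"
        using M[of m n] by (simp add: norm2_sum)
      then show "norm (\<Sum>k = m..<n. a k *\<^sub>R e k) < r"
        using r by (simp add: power_less_imp_less_base)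
    qed
  qed
  have "(\<lambda>k. (a k *\<^sub>R e k) \<bullet> e j) sums ((\<Sum>k. a k *\<^sub>R e k) \<bullet> e j)"
    using bounded_linear.sums[OF bounded_linear_inner_left summable_sums[OF sm]] .
  moreover have "(\<lambda>k. (a k *\<^sub>R e k) \<bullet> e j) = (\<lambda>k. if k = j then a j else 0)"
    by (auto simp: ortho)
  moreover have "(\<lambda>k. if k = j then a j else 0) sums a j"
    using sums_single[of j "\<lambda>_. a j"] by simp
  ultimately show "(\<Sum>k. a k *\<^sub>R e k) \<bullet> e j = a j" using sums_unique2 by metis
qed

lemma coord_bound:
  assumes C: "C \<ge> 0" and h: "\<And>k. \<bar>w \<bullet> e k\<bar> \<le> C * \<bar>v \<bullet> e k\<bar>"
  shows "norm w \<le> C * norm v"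
proof -
  have s: "(\<lambda>k. C\<^sup>2 * (v \<bullet> e k)\<^sup>2) sums (C\<^sup>2 * (norm v)\<^sup>2)"
    by (intro sums_mult parseval)
  have le: "(w \<bullet> e k)\<^sup>2 \<le> C\<^sup>2 * (v \<bullet> e k)\<^sup>2" for k
  proof -
    have "\<bar>w \<bullet> e k\<bar>\<^sup>2 \<le> (C * \<bar>v \<bullet> e k\<bar>)\<^sup>2"
      by (rule power_mono[OF h abs_ge_zero])
    also have "(C * \<bar>v \<bullet> e k\<bar>)\<^sup>2 = C\<^sup>2 * (v \<bullet> e k)\<^sup>2"
      by (simp only: power_mult_distrib power2_abs)
    finally show ?thesis by (simp only: power2_abs)
  qed
  have "(norm w)\<^sup>2 \<le> C\<^sup>2 * (norm v)\<^sup>2"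
    by (rule sums_le[OF le parseval[of w] s])
  also have "\<dots> = (C * norm v)\<^sup>2" by (simp only: power_mult_distrib)
  finally show ?thesis
    by (rule power2_le_imp_le) (use C in simp)
qed


lemma sq_summable_le: "(\<And>k. \<bar>a k\<bar> \<le> \<bar>u \<bullet> e k\<bar>) \<Longrightarrow> summable (\<lambda>k. (a k)\<^sup>2)"
  apply (rule summable_comparison_test[OF _ sums_summable[OF parseval[of u]]])
  apply (intro exI[of _ 0] allI impI)
  apply (simp add: abs_le_square_iff)
  done

lemma P_coord: "Pproj e M u \<bullet> e j = (if j < M then u \<bullet> e j else 0)"
  unfolding Pproj_def by (simp add: coord_sum)

lemma Q_coord: "Qproj e M u \<bullet> e j = (if j < M then 0 else u \<bullet> e j)"
  unfolding Qproj_def by (simp add: inner_diff_left P_coord)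

lemma PQ_sum: "Pproj e M u + Qproj e M u = u"
  unfolding Qproj_def by simp

lemma P_norm: "norm (Pproj e M u) \<le> norm u"
  using coord_bound[of 1 "Pproj e M u" u] by (simp add: P_coord)

lemma Q_norm: "norm (Qproj e M u) \<le> norm u"
  using coord_bound[of 1 "Qproj e M u" u] by (simp add: Q_coord)

lemma P_norm_sum: "norm (Pproj e M u) \<le> (\<Sum>k<M. \<bar>u \<bullet> e k\<bar>)"
  unfolding Pproj_def by (rule order_trans[OF norm_sum]) simp

lemma P_add: "Pproj e M (u + v) = Pproj e M u + Pproj e M v"
  by (rule coord_eq) (simp add: P_coord inner_add_left)
lemma P_diff: "Pproj e M (u - v) = Pproj e M u - Pproj e M v"
  by (rule coord_eq) (simp add: P_coord inner_diff_left)
lemma Q_add: "Qproj e M (u + v) = Qproj e M u + Qproj e M v"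
  by (rule coord_eq) (simp add: Q_coord inner_add_left)
lemma Q_diff: "Qproj e M (u - v) = Qproj e M u - Qproj e M v"
  by (rule coord_eq) (simp add: Q_coord inner_diff_left)
lemma P_scale: "Pproj e M (c *\<^sub>R u) = c *\<^sub>R Pproj e M u"
  by (rule coord_eq) (simp add: P_coord)
lemma Q_scale: "Qproj e M (c *\<^sub>R u) = c *\<^sub>R Qproj e M u"
  by (rule coord_eq) (simp add: Q_coord)

lemma bl_P: "bounded_linear (Pproj e M)"
  by (rule bounded_linear_intro[of _ 1]) (auto simp: P_add P_scale P_norm)
lemma bl_Q: "bounded_linear (Qproj e M)"
  by (rule bounded_linear_intro[of _ 1]) (auto simp: Q_add Q_scale Q_norm)

end

locale sp = onb e for e :: "nat \<Rightarrow> 'a::{real_inner,complete_space}" +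
  fixes lam :: "nat \<Rightarrow> real" and N :: nat
  assumes sd: "spectral_data e lam N"
begin

lemma lam_mono: "j \<le> k \<Longrightarrow> lam j \<le> lam k"
  using sd unfolding spectral_data_def mono_def by blast

lemma lam_pos: "lam k > 0"
  using sd lam_mono[of 0 k] unfolding spectral_data_def by auto

lemma N_pos: "N \<ge> 1"
  using sd unfolding spectral_data_def by auto

abbreviation S where "S \<equiv> semigroup e lam"

lemma sg_coord:
  assumes h: "h \<ge> 0"
  shows "S h u \<bullet> e j = exp (- lam j * h) * (u \<bullet> e j)"
proof -
  have "\<bar>exp (- lam k * h) * (u \<bullet> e k)\<bar> \<le> \<bar>u \<bullet> e k\<bar>" for k
  proof -
    have "exp (- lam k * h) \<le> 1" using lam_pos[of k] h by (simp add: mult_nonneg_nonneg)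
    then show ?thesis by (simp add: abs_mult mult_left_le_one_le)
  qed
  then show ?thesis
    unfolding semigroup_def by (intro synth sq_summable_le) auto
qed

lemma sg_add: "h \<ge> 0 \<Longrightarrow> S h (u + v) = S h u + S h v"
  by (rule coord_eq) (simp add: sg_coord inner_add_left algebra_simps)
lemma sg_diff: "h \<ge> 0 \<Longrightarrow> S h (u - v) = S h u - S h v"
  by (rule coord_eq) (simp add: sg_coord inner_diff_left algebra_simps)
lemma sg_scale: "h \<ge> 0 \<Longrightarrow> S h (c *\<^sub>R u) = c *\<^sub>R S h u"
  by (rule coord_eq) (simp add: sg_coord algebra_simps)

lemma exp_le1: "h \<ge> 0 \<Longrightarrow> exp (- lam k * h) \<le> 1"
  using lam_pos[of k] by (simp add: mult_nonneg_nonneg)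

lemma sg_norm: assumes h: "h \<ge> 0" shows "norm (S h u) \<le> norm u"
proof -
  have "norm (S h u) \<le> 1 * norm u"
    by (rule coord_bound) (use h exp_le1[OF h] in \<open>simp_all add: sg_coord abs_mult mult_left_le_one_le\<close>)
  then show ?thesis by simp
qed

lemma bl_S: "h \<ge> 0 \<Longrightarrow> bounded_linear (S h)"
  by (rule bounded_linear_intro[of _ 1]) (auto simp: sg_add sg_scale sg_norm)

lemma sg_tail: 
  assumes h: "h \<ge> 0"
  shows "norm (Qproj e M (S h u)) \<le> exp (- lam M * h) * norm u"
proof (rule coord_bound)
  fix k
  show "\<bar>Qproj e M (S h u) \<bullet> e k\<bar> \<le> exp (- lam M * h) * \<bar>u \<bullet> e k\<bar>"
  proof (cases "k < M")
    case False
    then have "lam M \<le> lam k" using lam_mono by simp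
    then have "exp (- lam k * h) \<le> exp (- lam M * h)" using h by (simp add: mult_right_mono)
    then show ?thesis using False h by (simp add: Q_coord sg_coord abs_mult mult_right_mono)
  qed (simp add: Q_coord)
qed simp

lemma one_minus_exp: "(x::real) \<ge> 0 \<Longrightarrow> \<bar>exp (- x) - 1\<bar> \<le> x"
  using exp_ge_add_one_self[of "- x"] by (simp add: abs_if)

lemma sg_head_diff:
  assumes h: "h \<ge> 0"
  shows "norm (Pproj e M (S h u - u)) \<le> (lam M * h) * norm u"
proof (rule coord_bound)
  fix k
  show "\<bar>Pproj e M (S h u - u) \<bullet> e k\<bar> \<le> (lam M * h) * \<bar>u \<bullet> e k\<bar>"
  proof (cases "k < M")
    case True
    then have "lam k \<le> lam M" using lam_mono by simp
    have "\<bar>exp (- (lam k * h)) - 1\<bar> \<le> lam k * h"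
      using lam_pos[of k] h by (intro one_minus_exp) simp
    also have "\<dots> \<le> lam M * h" using \<open>lam k \<le> lam M\<close> h by (simp add: mult_right_mono)
    finally have "\<bar>exp (- lam k * h) - 1\<bar> \<le> lam M * h" by simp
    then have "\<bar>(exp (- lam k * h) - 1) * (u \<bullet> e k)\<bar> \<le> lam M * h * \<bar>u \<bullet> e k\<bar>"
      by (simp add: abs_mult mult_right_mono)
    then show ?thesis using True h
      by (simp add: P_coord sg_coord inner_diff_left algebra_simps)
  qed (use h lam_pos[of M] in \<open>simp add: P_coord\<close>)
qed (use h lam_pos[of M] in simp)

lemma sg_tail_diff:
  assumes h: "h \<ge> 0"
  shows "norm (Qproj e M (S h u - u)) \<le> norm (Qproj e M u)"
proof -
  have "norm (Qproj e M (S h u - u)) \<le> 1 * norm (Qproj e M u)"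
  proof (rule coord_bound)
    fix k
    have "\<bar>exp (- lam k * h) - 1\<bar> \<le> 1" using exp_le1[OF h, of k] by simp
    then have "\<bar>(exp (- lam k * h) - 1) * (u \<bullet> e k)\<bar> \<le> \<bar>u \<bullet> e k\<bar>"
      by (simp add: abs_mult mult_left_le_one_le)
    then show "\<bar>Qproj e M (S h u - u) \<bullet> e k\<bar> \<le> 1 * \<bar>Qproj e M u \<bullet> e k\<bar>"
      using h by (simp add: Q_coord sg_coord inner_diff_left algebra_simps)
  qed simp
  then show ?thesis by simp
qed

lemma sg_Q_decay:
  assumes h: "h \<ge> 0"
  shows "norm (S h (Qproj e N u)) \<le> exp (- lam N * h) * norm u"
proof (rule coord_bound)
  fix k
  show "\<bar>S h (Qproj e N u) \<bullet> e k\<bar> \<le> exp (- lam N * h) * \<bar>u \<bullet> e k\<bar>"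
  proof (cases "k < N")
    case False
    then have "lam N \<le> lam k" using lam_mono by simp
    then have "exp (- lam k * h) \<le> exp (- lam N * h)" using h by (simp add: mult_right_mono)
    then show ?thesis using False h by (simp add: Q_coord sg_coord abs_mult mult_right_mono)
  qed (simp add: Q_coord sg_coord h)
qed simp

lemma Q_of_P: "M \<ge> N \<Longrightarrow> Qproj e M (Pproj e N u) = 0"
  by (rule coord_eq) (simp add: Q_coord P_coord)

end


lemma has_integral_inner_left:
  "(f has_integral I) S \<Longrightarrow> ((\<lambda>x. f x \<bullet> v) has_integral (I \<bullet> v)) S"
  using has_integral_linear[OF _ bounded_linear_inner_left, of f I S v] by (simp add: o_def)

lemma has_integral_norm_bound_real:
  fixes f :: "real \<Rightarrow> 'a::real_normed_vector"
  assumes "(f has_integral I) {s..t}" "s \<le> t" "K \<ge> 0" "\<And>x. x \<in> {s..t} \<Longrightarrow> norm (f x) \<le> K"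
  shows "norm I \<le> K * (t - s)"
  using has_integral_bound[of K f I s t] assms by (simp add: content_real)

lemma exp_weight_integral:
  fixes a C t :: real
  assumes st: "s \<le> t" and a: "a > 0"
  shows "((\<lambda>x. C * exp (- a * (t - x))) has_integral (C * (1 - exp (- a * (t - s))) / a)) {s..t}"
proof -
  have "((\<lambda>x. C * exp (- a * (t - x))) has_integral
     ((\<lambda>x. C * exp (- a * (t - x)) / a) t - (\<lambda>x. C * exp (- a * (t - x)) / a) s)) {s..t}"
  proof (rule fundamental_theorem_of_calculus[OF st])
    fix x assume "x \<in> {s..t}"
    show "((\<lambda>x. C * exp (- a * (t - x)) / a) has_vector_derivative C * exp (- a * (t - x))) (at x within {s..t})"
      using a by (auto intro!: derivative_eq_intros simp: has_real_derivative_iff_has_vector_derivative[symmetric])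
  qed
  then show ?thesis by (simp add: diff_divide_distrib right_diff_distrib)
qed

lemma has_integral_exp_bound:
  fixes f :: "real \<Rightarrow> 'a::real_inner"
  assumes I: "(f has_integral I) {s..t}" and st: "s \<le> t" and a: "a > 0" and K: "K \<ge> 0"
    and b: "\<And>x. x \<in> {s..t} \<Longrightarrow> norm (f x) \<le> K * exp (- a * (t - x))"
  shows "norm I \<le> K / a"
proof -
  have i1: "((\<lambda>x. f x \<bullet> I) has_integral (I \<bullet> I)) {s..t}"
    by (rule has_integral_inner_left[OF I])
  have i2: "((\<lambda>x. (K * norm I) * exp (- a * (t - x))) has_integral
       ((K * norm I) * (1 - exp (- a * (t - s))) / a)) {s..t}"
    by (rule exp_weight_integral[OF st a])
  have "I \<bullet> I \<le> (K * norm I) * (1 - exp (- a * (t - s))) / a"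
  proof (rule has_integral_le[OF i1 i2])
    fix x assume x: "x \<in> {s..t}"
    have "f x \<bullet> I \<le> norm (f x) * norm I" by (rule norm_cauchy_schwarz)
    also have "\<dots> \<le> (K * exp (- a * (t - x))) * norm I" using b[OF x] by (simp add: mult_right_mono)
    finally show "f x \<bullet> I \<le> (K * norm I) * exp (- a * (t - x))" by (simp add: algebra_simps)
  qed
  also have "\<dots> \<le> (K * norm I) / a"
  proof (intro divide_right_mono mult_right_le_one_le)
    show "0 \<le> K * norm I" using K by simp
    have "exp (- a * (t - s)) \<le> 1" using a st by (simp add: mult_nonneg_nonneg)
    then show "0 \<le> 1 - exp (- a * (t - s))" by simp
  qed (use a in auto)
  finally have "(norm I)\<^sup>2 \<le> (K / a) * norm I" by (simp add: power2_norm_eq_inner)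
  then have h: "norm I * norm I \<le> (K / a) * norm I" by (simp add: power2_eq_square)
  show ?thesis
  proof (cases "norm I = 0")
    case True then show ?thesis using a K by simp
  next
    case False then have "norm I > 0" by simp
    then show ?thesis using h mult_right_le_imp_le by blast
  qed
qed

lemma has_integral_uniform_limit_real:
  fixes f :: "nat \<Rightarrow> real \<Rightarrow> 'a::real_normed_vector"
  assumes fI: "\<And>n. (f n has_integral I n) {s..t}"
    and unif: "\<And>\<epsilon>. \<epsilon> > 0 \<Longrightarrow> \<exists>M. \<forall>n\<ge>M. \<forall>x\<in>{s..t}. norm (f n x - g x) \<le> \<epsilon>"
    and lim: "I \<longlonglongrightarrow> J"
  shows "(g has_integral J) {s..t}"
proof -
  have cb: "cbox s t = {s..t}" by simp
  show ?thesis
    unfolding cb[symmetric] has_integral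
  proof (intro allI impI)
    fix \<epsilon> :: real assume \<epsilon>: "\<epsilon> > 0"
    define c where "c = Henstock_Kurzweil_Integration.content (cbox s t)"
    have c0: "c \<ge> 0" unfolding c_def by simp
    define \<delta> where "\<delta> = \<epsilon> / 3 / (c + 1)"
    have \<delta>: "\<delta> > 0" using \<epsilon> c0 by (simp add: \<delta>_def)
    have \<delta>c: "\<delta> * c < \<epsilon> / 3"
    proof -
      have "\<delta> * c = \<epsilon> / 3 * (c / (c + 1))" by (simp add: \<delta>_def)
      also have "\<dots> < \<epsilon> / 3 * 1" using \<epsilon> c0 by (intro mult_strict_left_mono) auto
      finally show ?thesis by simp
    qed
    have e3: "\<epsilon> / 3 > 0" using \<epsilon> by simp
    obtain M1 where M1: "\<And>n x. n \<ge> M1 \<Longrightarrow> x \<in> {s..t} \<Longrightarrow> norm (f n x - g x) \<le> \<delta>"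
      using unif[OF \<delta>] by blast
    obtain M2 where M2: "\<And>n. n \<ge> M2 \<Longrightarrow> dist (I n) J < \<epsilon> / 3"
      using lim e3 unfolding lim_sequentially by blast
    define n where "n = max M1 M2"
    have n1: "n \<ge> M1" and n2: "n \<ge> M2" by (auto simp: n_def)
    have "\<exists>\<gamma>. gauge \<gamma> \<and> (\<forall>\<D>. \<D> tagged_division_of cbox s t \<and> \<gamma> fine \<D> \<longrightarrow>
          norm ((\<Sum>(x,k)\<in>\<D>. Henstock_Kurzweil_Integration.content k *\<^sub>R f n x) - I n) < \<epsilon> / 3)"
      using fI[of n, unfolded cb[symmetric] has_integral, rule_format, OF e3] .
    then obtain \<gamma> where \<gamma>: "gauge \<gamma>"
      and \<gamma>D: "\<forall>\<D>. \<D> tagged_division_of cbox s t \<and> \<gamma> fine \<D> \<longrightarrow>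
          norm ((\<Sum>(x,k)\<in>\<D>. Henstock_Kurzweil_Integration.content k *\<^sub>R f n x) - I n) < \<epsilon> / 3"
      by (elim exE conjE)
    show "\<exists>\<gamma>. gauge \<gamma> \<and> (\<forall>\<D>. \<D> tagged_division_of cbox s t \<and> \<gamma> fine \<D> \<longrightarrow>
              norm ((\<Sum>(x,k)\<in>\<D>. Henstock_Kurzweil_Integration.content k *\<^sub>R g x) - J) < \<epsilon>)"
    proof (intro exI conjI allI impI)
      show "gauge \<gamma>" by (rule \<gamma>)
      fix \<D> assume D: "\<D> tagged_division_of cbox s t \<and> \<gamma> fine \<D>"
      then have Dt: "\<D> tagged_division_of cbox s t" by blast
      have fin: "finite \<D>" using Dt by (rule tagged_division_of_finite)
      have tag: "\<And>x k. (x, k) \<in> \<D> \<Longrightarrow> x \<in> {s..t}"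
        using tagged_division_ofD(2,3)[OF Dt] cb by blast
      have "norm ((\<Sum>(x,k)\<in>\<D>. Henstock_Kurzweil_Integration.content k *\<^sub>R g x) - (\<Sum>(x,k)\<in>\<D>. Henstock_Kurzweil_Integration.content k *\<^sub>R f n x))
          = norm (\<Sum>(x,k)\<in>\<D>. Henstock_Kurzweil_Integration.content k *\<^sub>R (g x - f n x))"
        by (simp add: sum_subtractf[symmetric] case_prod_beta scaleR_diff_right)
      also have "\<dots> \<le> (\<Sum>(x,k)\<in>\<D>. norm (Henstock_Kurzweil_Integration.content k *\<^sub>R (g x - f n x)))"
        by (rule order_trans[OF norm_sum]) (simp add: case_prod_beta)
      also have "\<dots> \<le> (\<Sum>(x,k)\<in>\<D>. Henstock_Kurzweil_Integration.content k * \<delta>)"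
      proof (rule sum_mono)
        fix p assume p: "p \<in> \<D>"
        obtain x k where pxk: "p = (x, k)" by fastforce
        have "norm (g x - f n x) \<le> \<delta>" using M1[OF n1 tag[OF p[unfolded pxk]]] by (simp add: norm_minus_commute)
        then show "(case p of (x, k) \<Rightarrow> norm (Henstock_Kurzweil_Integration.content k *\<^sub>R (g x - f n x))) \<le> (case p of (x, k) \<Rightarrow> Henstock_Kurzweil_Integration.content k * \<delta>)"
          by (simp add: pxk mult_left_mono)
      qed
      also have "\<dots> = \<delta> * c"
        unfolding c_def additive_content_tagged_division[OF Dt, symmetric]
        by (simp add: sum_distrib_left case_prod_beta mult.commute)
      finally have A: "norm ((\<Sum>(x,k)\<in>\<D>. Henstock_Kurzweil_Integration.content k *\<^sub>R g x) - (\<Sum>(x,k)\<in>\<D>. Henstock_Kurzweil_Integration.content k *\<^sub>R f n x)) < \<epsilon> / 3"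
        using \<delta>c by linarith
      have B: "norm ((\<Sum>(x,k)\<in>\<D>. Henstock_Kurzweil_Integration.content k *\<^sub>R f n x) - I n) < \<epsilon> / 3" using \<gamma>D D by simp
      have C: "norm (I n - J) < \<epsilon> / 3" using M2[OF n2] by (simp add: dist_norm)
      have "norm ((\<Sum>(x,k)\<in>\<D>. Henstock_Kurzweil_Integration.content k *\<^sub>R g x) - J) \<le>
          norm ((\<Sum>(x,k)\<in>\<D>. Henstock_Kurzweil_Integration.content k *\<^sub>R g x) - (\<Sum>(x,k)\<in>\<D>. Henstock_Kurzweil_Integration.content k *\<^sub>R f n x))
          + norm ((\<Sum>(x,k)\<in>\<D>. Henstock_Kurzweil_Integration.content k *\<^sub>R f n x) - I n) + norm (I n - J)"
        by (rule norm_diff_triangle_le[OF norm_diff_triangle_le]) auto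
      then show "norm ((\<Sum>(x,k)\<in>\<D>. Henstock_Kurzweil_Integration.content k *\<^sub>R g x) - J) < \<epsilon>"
        using A B C by linarith
    qed
  qed
qed



context sp begin
lemma sg_zero: "h \<ge> 0 \<Longrightarrow> S h 0 = 0"
  using sg_scale[of h 0 0] by simp
lemma P_of_Q: "Pproj e N (Qproj e N u) = 0"
  by (rule coord_eq) (simp add: Q_coord P_coord)
lemma Q_of_PN: "Qproj e N (Pproj e N u) = 0"
  by (rule coord_eq) (simp add: Q_coord P_coord)
end

locale ctx = sp e lam N for e :: "nat \<Rightarrow> 'a::{real_inner,complete_space}" and lam N +
  fixes F :: "'a \<Rightarrow> 'a" and K0 K1 R :: real and p0 :: 'a and pn qn :: "nat \<Rightarrow> real \<Rightarrow> 'a"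
  assumes nl: "nonlinearity lam N F K0 K1 R"
    and p0: "Pproj e N p0 = p0"
    and sol: "\<And>n. mild_solution_PQ e lam N F {- real n..0} (pn n) (qn n)"
    and pn0: "\<And>n. pn n 0 = p0"
    and qnn: "\<And>n. qn n (- real n) = 0"
begin

definition U where "U n t = pn n t + qn n t"

lemma K0_pos: "K0 > 0" and K1_pos: "K1 > 0" and F_bound: "norm (F u) \<le> K0"
  and F_lip: "norm (F u - F v) \<le> K1 * norm (u - v)"
  using nl unfolding nonlinearity_def by auto

lemma F_coord: "\<bar>F u \<bullet> e k\<bar> \<le> K0"
  using Cauchy_Schwarz_ineq2[of "F u" "e k"] F_bound[of u] by simp

lemma pn_P: "t \<in> {- real n..0} \<Longrightarrow> Pproj e N (pn n t) = pn n t"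
  and qn_Q: "t \<in> {- real n..0} \<Longrightarrow> Qproj e N (qn n t) = qn n t"
  and pn_cont: "continuous_on {- real n..0} (pn n)"
  and qn_cont: "continuous_on {- real n..0} (qn n)"
  using sol[of n] unfolding mild_solution_PQ_def by auto

lemma EP: "s \<in> {- real n..0} \<Longrightarrow> t \<in> {- real n..0} \<Longrightarrow> s \<le> t \<Longrightarrow>
   ((\<lambda>\<tau>. S (t - \<tau>) (Pproj e N (F (U n \<tau>)))) has_integral (pn n t - S (t - s) (pn n s))) {s..t}"
  and EQ: "s \<in> {- real n..0} \<Longrightarrow> t \<in> {- real n..0} \<Longrightarrow> s \<le> t \<Longrightarrow>
   ((\<lambda>\<tau>. S (t - \<tau>) (Qproj e N (F (U n \<tau>)))) has_integral (qn n t - S (t - s) (qn n s))) {s..t}"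
  using sol[of n] unfolding mild_solution_PQ_def U_def by auto

lemma EU:
  assumes s: "s \<in> {- real n..0}" and t: "t \<in> {- real n..0}" and st: "s \<le> t"
  shows "((\<lambda>\<tau>. S (t - \<tau>) (F (U n \<tau>))) has_integral (U n t - S (t - s) (U n s))) {s..t}"
proof -
  have "((\<lambda>\<tau>. S (t - \<tau>) (Pproj e N (F (U n \<tau>))) + S (t - \<tau>) (Qproj e N (F (U n \<tau>))))
      has_integral ((pn n t - S (t - s) (pn n s)) + (qn n t - S (t - s) (qn n s)))) {s..t}"
    by (rule has_integral_add[OF EP[OF s t st] EQ[OF s t st]])
  moreover have "(pn n t - S (t - s) (pn n s)) + (qn n t - S (t - s) (qn n s)) = U n t - S (t - s) (U n s)"
    using st by (simp add: U_def sg_add)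
  ultimately have A: "((\<lambda>\<tau>. S (t - \<tau>) (Pproj e N (F (U n \<tau>))) + S (t - \<tau>) (Qproj e N (F (U n \<tau>))))
      has_integral (U n t - S (t - s) (U n s))) {s..t}" by simp
  show ?thesis
    by (rule has_integral_eq[OF _ A]) (simp add: sg_add[symmetric] PQ_sum)
qed

end


context ctx begin

lemma UQ: "t \<in> {- real n..0} \<Longrightarrow> Qproj e N (U n t) = qn n t"
  unfolding U_def Q_add using pn_P[of t n, symmetric] qn_Q[of t n]
  by (metis Q_of_PN add_0)

lemma UP: "t \<in> {- real n..0} \<Longrightarrow> Pproj e N (U n t) = pn n t"
  unfolding U_def P_add using pn_P[of t n] qn_Q[of t n, symmetric]
  by (metis P_of_Q add_0_right)

lemma lamN_pos: "lam N > 0" by (rule lam_pos)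

lemma Bq: assumes t: "t \<in> {- real n..0}" shows "norm (qn n t) \<le> K0 / lam N"
proof -
  have s: "- real n \<in> {- real n..0}" by simp
  have st: "- real n \<le> t" using t by simp
  have I: "((\<lambda>\<tau>. S (t - \<tau>) (Qproj e N (F (U n \<tau>)))) has_integral qn n t) {- real n..t}"
    using EQ[OF s t st] st by (simp add: qnn sg_zero)
  show ?thesis
  proof (rule has_integral_exp_bound[OF I st lamN_pos])
    show "K0 \<ge> 0" using K0_pos by simp
    fix x assume x: "x \<in> {- real n..t}"
    have "norm (S (t - x) (Qproj e N (F (U n x)))) \<le> exp (- lam N * (t - x)) * norm (F (U n x))"
      using x by (intro sg_Q_decay) simp
    also have "\<dots> \<le> exp (- lam N * (t - x)) * K0" by (intro mult_left_mono F_bound) simp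
    finally show "norm (S (t - x) (Qproj e N (F (U n x)))) \<le> K0 * exp (- lam N * (t - x))"
      by (simp add: mult.commute)
  qed
qed

lemma Bcoord:
  assumes t: "t \<in> {- real n..0}" and k: "k < N"
  shows "\<bar>U n t \<bullet> e k\<bar> \<le> exp (lam N * (- t)) * (norm p0 + K0 * (- t))"
proof -
  have z: "0 \<in> {- real n..0}" by simp
  have t0: "t \<le> 0" using t by simp
  have I: "((\<lambda>\<tau>. S (0 - \<tau>) (F (U n \<tau>)) \<bullet> e k) has_integral ((U n 0 - S (0 - t) (U n t)) \<bullet> e k)) {t..0}"
    by (rule has_integral_inner_left[OF EU[OF t z t0]])
  have "norm ((U n 0 - S (0 - t) (U n t)) \<bullet> e k) \<le> K0 * (0 - t)"
  proof (rule has_integral_norm_bound_real[OF I t0])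
    show "K0 \<ge> 0" using K0_pos by simp
    fix x assume x: "x \<in> {t..0}"
    have "norm (S (0 - x) (F (U n x)) \<bullet> e k) \<le> norm (S (0 - x) (F (U n x)))"
      using Cauchy_Schwarz_ineq2[of "S (0 - x) (F (U n x))" "e k"] by simp
    also have "\<dots> \<le> norm (F (U n x))" using x by (intro sg_norm) simp
    also have "\<dots> \<le> K0" by (rule F_bound)
    finally show "norm (S (0 - x) (F (U n x)) \<bullet> e k) \<le> K0" .
  qed
  moreover have "(U n 0 - S (0 - t) (U n t)) \<bullet> e k = U n 0 \<bullet> e k - exp (lam k * t) * (U n t \<bullet> e k)"
    using t0 by (simp add: inner_diff_left sg_coord)
  moreover have "U n 0 \<bullet> e k = p0 \<bullet> e k"
  proof -
    have "qn n 0 \<bullet> e k = Qproj e N (qn n 0) \<bullet> e k" using qn_Q[OF z] by simp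
    also have "\<dots> = 0" using k by (simp add: Q_coord)
    finally show ?thesis by (simp add: U_def pn0 inner_add_left)
  qed
  moreover have "\<bar>p0 \<bullet> e k\<bar> \<le> norm p0"
    using Cauchy_Schwarz_ineq2[of p0 "e k"] by simp
  ultimately have "exp (lam k * t) * \<bar>U n t \<bullet> e k\<bar> \<le> norm p0 + K0 * (- t)"
    by (simp add: abs_mult)
  then have "\<bar>U n t \<bullet> e k\<bar> \<le> exp (- (lam k * t)) * (norm p0 + K0 * (- t))"
    by (simp add: exp_minus field_simps)
  also have "\<dots> \<le> exp (lam N * (- t)) * (norm p0 + K0 * (- t))"
  proof (rule mult_right_mono)
    have "lam k \<le> lam N" using k lam_mono by simp
    then show "exp (- (lam k * t)) \<le> exp (lam N * (- t))" using t0 by (simp add: mult_right_mono_neg)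
    have "K0 * (- t) \<ge> 0" using K0_pos t0 by (simp add: mult_nonneg_nonpos)
    then show "0 \<le> norm p0 + K0 * (- t)" using norm_ge_zero[of p0] by linarith
  qed
  finally show ?thesis .
qed

definition B :: "real \<Rightarrow> real" where
  "B m = real N * (exp (lam N * m) * (norm p0 + K0 * m)) + K0 / lam N"

lemma B_pos: "m \<ge> 0 \<Longrightarrow> B m > 0"
  unfolding B_def using K0_pos lamN_pos by (intro add_nonneg_pos) auto

lemma BU:
  assumes t: "t \<in> {- m..0}" and mn: "m \<le> real n"
  shows "norm (U n t) \<le> B m"
proof -
  have tn: "t \<in> {- real n..0}" using t mn by simp
  have "norm (Pproj e N (U n t)) \<le> (\<Sum>k<N. \<bar>U n t \<bullet> e k\<bar>)" by (rule P_norm_sum)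
  also have "\<dots> \<le> (\<Sum>k<N. exp (lam N * m) * (norm p0 + K0 * m))"
  proof (rule sum_mono)
    fix k assume "k \<in> {..<N}"
    then have "\<bar>U n t \<bullet> e k\<bar> \<le> exp (lam N * (- t)) * (norm p0 + K0 * (- t))"
      using Bcoord[OF tn] by simp
    also have "\<dots> \<le> exp (lam N * m) * (norm p0 + K0 * m)"
    proof (rule mult_mono)
      have mt: "- t \<le> m" and t0: "t \<le> 0" using t by auto
      show "exp (lam N * (- t)) \<le> exp (lam N * m)" using mult_left_mono[OF mt, of "lam N"] lamN_pos by simp
      show "norm p0 + K0 * (- t) \<le> norm p0 + K0 * m" using mult_left_mono[OF mt, of K0] K0_pos by simp
      have "K0 * (- t) \<ge> 0" using K0_pos t0 by (simp add: mult_nonneg_nonpos)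
      then show "0 \<le> norm p0 + K0 * (- t)" using norm_ge_zero[of p0] by linarith
    qed simp
    finally show "\<bar>U n t \<bullet> e k\<bar> \<le> exp (lam N * m) * (norm p0 + K0 * m)" .
  qed
  also have "\<dots> = real N * (exp (lam N * m) * (norm p0 + K0 * m))" by simp
  finally have P: "norm (Pproj e N (U n t)) \<le> real N * (exp (lam N * m) * (norm p0 + K0 * m))" .
  have "norm (U n t) \<le> norm (Pproj e N (U n t)) + norm (Qproj e N (U n t))"
    using norm_triangle_ineq[of "Pproj e N (U n t)" "Qproj e N (U n t)"] by (simp add: PQ_sum)
  also have "\<dots> \<le> real N * (exp (lam N * m) * (norm p0 + K0 * m)) + K0 / lam N"
    using P Bq[OF tn] UQ[OF tn] by simp
  finally show ?thesis unfolding B_def .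
qed

end


context ctx begin

lemma QM_U: "M \<ge> N \<Longrightarrow> t \<in> {- real n..0} \<Longrightarrow> Qproj e M (U n t) = Qproj e M (qn n t)"
  unfolding U_def Q_add using pn_P[of t n] Q_of_P[of M "pn n t"] by simp

lemma norm_SQF: "h \<ge> 0 \<Longrightarrow> norm (S h (Qproj e N (F u))) \<le> K0"
  using sg_norm[of h "Qproj e N (F u)"] Q_norm[of N "F u"] F_bound[of u] by linarith

lemma norm_SF: "h \<ge> 0 \<Longrightarrow> norm (S h (F u)) \<le> K0"
  using sg_norm[of h "F u"] F_bound[of u] by linarith

lemma tail_bound:
  assumes M: "M \<ge> N" and h: "h > 0" and t: "t \<in> {- real n..0}"
  shows "norm (Qproj e M (U n t)) \<le> exp (- lam M * h) * (K0 / lam N) + K0 * h"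
proof -
  have eq: "Qproj e M (U n t) = Qproj e M (qn n t)" by (rule QM_U[OF M t])
  have K0: "K0 \<ge> 0" using K0_pos by simp
  have e0: "exp (- lam M * h) * (K0 / lam N) \<ge> 0" using K0 lamN_pos by simp
  show ?thesis
  proof (cases "t - h \<ge> - real n")
    case True
    define s where "s = t - h"
    have s: "s \<in> {- real n..0}" and st: "s \<le> t" using True t h by (auto simp: s_def)
    have I: "((\<lambda>\<tau>. S (t - \<tau>) (Qproj e N (F (U n \<tau>)))) has_integral (qn n t - S (t - s) (qn n s))) {s..t}"
      by (rule EQ[OF s t st])
    have nI: "norm (qn n t - S (t - s) (qn n s)) \<le> K0 * (t - s)"
      by (rule has_integral_norm_bound_real[OF I st K0]) (auto intro: norm_SQF)
    have "Qproj e M (qn n t) = Qproj e M (S h (qn n s)) + Qproj e M (qn n t - S (t - s) (qn n s))"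
      by (simp add: Q_diff s_def)
    then have "norm (Qproj e M (qn n t)) \<le> norm (Qproj e M (S h (qn n s))) + norm (Qproj e M (qn n t - S (t - s) (qn n s)))"
      by (metis norm_triangle_ineq)
    also have "\<dots> \<le> exp (- lam M * h) * norm (qn n s) + norm (qn n t - S (t - s) (qn n s))"
      using sg_tail[of h M "qn n s"] h Q_norm[of M "qn n t - S (t - s) (qn n s)"] by simp
    also have "\<dots> \<le> exp (- lam M * h) * (K0 / lam N) + K0 * h"
      using Bq[OF s] nI by (intro add_mono mult_left_mono) (auto simp: s_def)
    finally show ?thesis using eq by simp
  next
    case False
    have s: "- real n \<in> {- real n..0}" by simp
    have st: "- real n \<le> t" using t by simp
    have I: "((\<lambda>\<tau>. S (t - \<tau>) (Qproj e N (F (U n \<tau>)))) has_integral qn n t) {- real n..t}"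
      using EQ[OF s t st] st by (simp add: qnn sg_zero)
    have "norm (qn n t) \<le> K0 * (t - - real n)"
      by (rule has_integral_norm_bound_real[OF I st K0]) (auto intro: norm_SQF)
    also have "\<dots> \<le> K0 * h" using False K0 by (intro mult_left_mono) auto
    finally have "norm (Qproj e M (qn n t)) \<le> K0 * h" using Q_norm[of M "qn n t"] by linarith
    then show ?thesis using eq e0 by simp
  qed
qed

lemma lam_at_top: "filterlim lam at_top sequentially"
  using sd unfolding spectral_data_def by blast

lemma tail:
  assumes \<epsilon>: "\<epsilon> > 0"
  shows "\<exists>M\<ge>N. \<forall>n t. t \<in> {- real n..0} \<longrightarrow> norm (Qproj e M (U n t)) \<le> \<epsilon>"
proof -
  define h where "h = \<epsilon> / (2 * K0)"
  have h: "h > 0" using \<epsilon> K0_pos by (simp add: h_def)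
  have "filterlim (\<lambda>M. h * lam M) at_top sequentially"
    by (rule filterlim_tendsto_pos_mult_at_top[OF tendsto_const h lam_at_top])
  then have "filterlim (\<lambda>M. - (h * lam M)) at_bot sequentially"
    by (simp add: filterlim_uminus_at_top)
  then have "((\<lambda>M. exp (- (h * lam M))) \<longlongrightarrow> 0) sequentially"
    by (rule filterlim_compose[OF exp_at_bot])
  then have "((\<lambda>M. exp (- (h * lam M)) * (K0 / lam N)) \<longlongrightarrow> 0 * (K0 / lam N)) sequentially"
    by (intro tendsto_mult tendsto_const)
  then have "eventually (\<lambda>M. exp (- (h * lam M)) * (K0 / lam N) < \<epsilon> / 2) sequentially"
    using \<epsilon> by (intro order_tendstoD) auto
  moreover have "eventually (\<lambda>M. M \<ge> N) sequentially" by (rule eventually_ge_at_top)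
  ultimately obtain M where M: "exp (- (h * lam M)) * (K0 / lam N) < \<epsilon> / 2" "M \<ge> N"
    using eventually_sequentially by (metis (mono_tags, lifting) eventually_conj_iff eventually_sequentially le_refl)
  have Kh: "K0 * h = \<epsilon> / 2" using K0_pos by (simp add: h_def)
  show ?thesis
  proof (intro exI[of _ M] conjI allI impI)
    show "M \<ge> N" by (rule M(2))
    fix n t assume t: "t \<in> {- real n..0}"
    have "norm (Qproj e M (U n t)) \<le> exp (- lam M * h) * (K0 / lam N) + K0 * h"
      by (rule tail_bound[OF M(2) h t])
    also have "\<dots> \<le> \<epsilon>" using M(1) Kh by (simp add: mult.commute)
    finally show "norm (Qproj e M (U n t)) \<le> \<epsilon>" .
  qed
qed

lemma equi_basic:
  assumes M: "M \<ge> N" and s: "s \<in> {- m..0}" and t: "t \<in> {- m..0}" and st: "s \<le> t"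
    and mn: "m \<le> real n"
  shows "norm (U n t - U n s) \<le> (lam M * B m + K0) * (t - s) + norm (Qproj e M (U n s))"
proof -
  have sn: "s \<in> {- real n..0}" and tn: "t \<in> {- real n..0}" using s t mn by auto
  define h where "h = t - s"
  have h: "h \<ge> 0" using st by (simp add: h_def)
  have K0: "K0 \<ge> 0" using K0_pos by simp
  have I: "((\<lambda>\<tau>. S (t - \<tau>) (F (U n \<tau>))) has_integral (U n t - S (t - s) (U n s))) {s..t}"
    by (rule EU[OF sn tn st])
  have nI: "norm (U n t - S (t - s) (U n s)) \<le> K0 * (t - s)"
    by (rule has_integral_norm_bound_real[OF I st K0]) (auto intro: norm_SF)
  have dec: "U n t - U n s = Pproj e M (S h (U n s) - U n s) + Qproj e M (S h (U n s) - U n s)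
      + (U n t - S (t - s) (U n s))"
    by (simp add: PQ_sum h_def)
  have "norm (U n t - U n s) \<le> norm (Pproj e M (S h (U n s) - U n s)) + norm (Qproj e M (S h (U n s) - U n s))
      + norm (U n t - S (t - s) (U n s))"
    unfolding dec by (rule norm_triangle_le[OF add_mono[OF norm_triangle_ineq order_refl]])
  also have "\<dots> \<le> (lam M * h) * B m + norm (Qproj e M (U n s)) + K0 * (t - s)"
  proof (intro add_mono)
    have "norm (Pproj e M (S h (U n s) - U n s)) \<le> (lam M * h) * norm (U n s)" by (rule sg_head_diff[OF h])
    also have "\<dots> \<le> (lam M * h) * B m"
      using BU[OF s mn] h lam_pos[of M] by (intro mult_left_mono) auto
    finally show "norm (Pproj e M (S h (U n s) - U n s)) \<le> (lam M * h) * B m" .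
    show "norm (Qproj e M (S h (U n s) - U n s)) \<le> norm (Qproj e M (U n s))" by (rule sg_tail_diff[OF h])
  qed (rule nI)
  also have "\<dots> = (lam M * B m + K0) * (t - s) + norm (Qproj e M (U n s))"
    by (simp add: h_def algebra_simps)
  finally show ?thesis .
qed

lemma equicont:
  assumes \<epsilon>: "\<epsilon> > 0" and m: "m \<ge> 0"
  shows "\<exists>\<delta>>0. \<forall>n s t. m \<le> real n \<longrightarrow> s \<in> {- m..0} \<longrightarrow> t \<in> {- m..0} \<longrightarrow> \<bar>t - s\<bar> < \<delta>
           \<longrightarrow> norm (U n t - U n s) \<le> \<epsilon>"
proof -
  obtain M where M: "M \<ge> N" and tl: "\<And>n t. t \<in> {- real n..0} \<Longrightarrow> norm (Qproj e M (U n t)) \<le> \<epsilon> / 2"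
    using tail[of "\<epsilon> / 2"] \<epsilon> by auto
  define C where "C = lam M * B m + K0"
  have C: "C > 0" unfolding C_def using lam_pos[of M] B_pos[OF m] K0_pos
    by (intro add_nonneg_pos) auto
  define \<delta> where "\<delta> = \<epsilon> / 2 / C"
  have \<delta>: "\<delta> > 0" using C \<epsilon> by (simp add: \<delta>_def)
  have main: "norm (U n t - U n s) \<le> \<epsilon>"
    if mn: "m \<le> real n" and s: "s \<in> {- m..0}" and t: "t \<in> {- m..0}" and st: "s \<le> t" and d: "t - s < \<delta>" for n s t
  proof -
    have sn: "s \<in> {- real n..0}" using s mn by auto
    have "norm (U n t - U n s) \<le> C * (t - s) + norm (Qproj e M (U n s))"
      unfolding C_def by (rule equi_basic[OF M s t st mn])
    also have "C * (t - s) \<le> C * \<delta>" using C d by simp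
    also have "C * \<delta> = \<epsilon> / 2" using C by (simp add: \<delta>_def)
    finally show ?thesis using tl[OF sn] by linarith
  qed
  show ?thesis
  proof (intro exI[of _ \<delta>] conjI allI impI)
    show "\<delta> > 0" by (rule \<delta>)
    fix n s t assume h: "m \<le> real n" "s \<in> {- m..0}" "t \<in> {- m..0}" "\<bar>t - s\<bar> < \<delta>"
    show "norm (U n t - U n s) \<le> \<epsilon>"
    proof (cases "s \<le> t")
      case True then show ?thesis using main[OF h(1,2,3) True] h(4) by simp
    next
      case False then show ?thesis using main[OF h(1,3,2)] h(4) by (simp add: norm_minus_commute)
    qed
  qed
qed

end


context ctx begin

definition gp :: "nat \<Rightarrow> nat \<Rightarrow> real" where "gp j K = - real j / real (Suc K)"

lemma gp_in: "gp j K \<in> {- real j..0}"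
proof -
  have "real j * 1 \<le> real j * real (Suc K)" by (intro mult_left_mono) auto
  then have "real j / real (Suc K) \<le> real j" by (simp add: divide_le_eq)
  then show ?thesis by (simp add: gp_def)
qed

lemma extract_sub:
  obtains r where "strict_mono r" "\<And>j K k. convergent (\<lambda>n. U (r n) (gp j K) \<bullet> e k)"
proof -
  define f where "f n = (\<lambda>(j, K, k). if real j \<le> real n then (U n (gp j K) \<bullet> e k) / B (real j) else 0)"
    for n :: nat
  have bnd: "norm (f n x) \<le> 1" for n x
  proof -
    obtain j K k where x: "x = (j, K, k)" by (cases x) auto
    show ?thesis
    proof (cases "real j \<le> real n")
      case True
      have Bp: "B (real j) > 0" by (rule B_pos) simp
      have "\<bar>U n (gp j K) \<bullet> e k\<bar> \<le> norm (U n (gp j K))"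
        using Cauchy_Schwarz_ineq2[of "U n (gp j K)" "e k"] by simp
      also have "\<dots> \<le> B (real j)" by (rule BU[OF gp_in True])
      finally show ?thesis using True Bp by (simp add: f_def x abs_div)
    qed (simp add: f_def x)
  qed
  obtain r where r: "strict_mono r" and cv: "\<And>x. x \<in> UNIV \<Longrightarrow> \<exists>l. (\<lambda>n. f (r n) x) \<longlonglongrightarrow> l"
    using function_convergent_subsequence[of "UNIV :: (nat \<times> nat \<times> nat) set" f 1] bnd by auto
  show ?thesis
  proof (rule that[OF r])
    fix j K k
    obtain l where l: "(\<lambda>n. f (r n) (j, K, k)) \<longlonglongrightarrow> l" using cv by blast
    have "(\<lambda>n. f (r n) (j, K, k) * B (real j)) \<longlonglongrightarrow> l * B (real j)"
      by (intro tendsto_intros l)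
    moreover have "eventually (\<lambda>n. f (r n) (j, K, k) * B (real j) = U (r n) (gp j K) \<bullet> e k) sequentially"
    proof -
      have "eventually (\<lambda>n. n \<ge> j) sequentially" by (rule eventually_ge_at_top)
      then show ?thesis
      proof eventually_elim
        case (elim n)
        then have "j \<le> r n" using seq_suble[OF r, of n] by linarith
        moreover have "B (real j) > 0" by (rule B_pos) simp
        ultimately show ?case by (simp add: f_def)
      qed
    qed
    ultimately have "(\<lambda>n. U (r n) (gp j K) \<bullet> e k) \<longlonglongrightarrow> l * B (real j)"
      by (rule Lim_transform_eventually)
    then show "convergent (\<lambda>n. U (r n) (gp j K) \<bullet> e k)" by (rule convergentI)
  qed
qed

end


context ctx begin

lemma grid_close:
  assumes x: "x \<in> {- real m..0}"
  obtains j where "j \<le> m * Suc K" "gp j K \<in> {- real m..0}" "\<bar>x - gp j K\<bar> < 1 / real (Suc K)"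
proof -
  define c where "c = real (Suc K)"
  have c: "c > 0" by (simp add: c_def)
  define j where "j = nat \<lfloor>- x * c\<rfloor>"
  have x0: "- x * c \<ge> 0" using x c by (simp add: mult_nonpos_nonneg)
  have j1: "real j \<le> - x * c" unfolding j_def using x0 by linarith
  have j2: "- x * c < real j + 1" unfolding j_def using x0 by linarith
  have "- x * c \<le> real m * c" using x c by (intro mult_right_mono) auto
  then have "real j \<le> real m * c" using j1 by linarith
  then have jm: "j \<le> m * Suc K" unfolding c_def by (metis of_nat_le_iff of_nat_mult)
  have g: "gp j K = - real j / c" by (simp add: gp_def c_def)
  have "real j / c \<le> - x" using j1 c by (simp add: divide_le_eq)
  moreover have "- x < real j / c + 1 / c" using j2 c by (simp add: field_simps)
  ultimately have d: "x \<le> gp j K" "gp j K - x < 1 / c" unfolding g by (auto simp: field_simps)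
  have "gp j K \<in> {- real m..0}" using d(1) x by (auto simp: gp_def)
  moreover have "\<bar>x - gp j K\<bar> < 1 / real (Suc K)" using d unfolding c_def by simp
  ultimately show ?thesis using that jm by blast
qed

lemma ucauchy:
  assumes r: "strict_mono r" and conv: "\<And>j K k. convergent (\<lambda>n. U (r n) (gp j K) \<bullet> e k)"
    and \<epsilon>: "\<epsilon> > 0"
  shows "\<exists>L. \<forall>a b x. L \<le> a \<longrightarrow> L \<le> b \<longrightarrow> x \<in> {- real m..0} \<longrightarrow> dist (U (r a) x) (U (r b) x) < \<epsilon>"
proof -
  define \<epsilon>' where "\<epsilon>' = \<epsilon> / 6"
  have \<epsilon>': "\<epsilon>' > 0" using \<epsilon> by (simp add: \<epsilon>'_def)
  obtain M where M: "M \<ge> N" and tl: "\<And>n t. t \<in> {- real n..0} \<Longrightarrow> norm (Qproj e M (U n t)) \<le> \<epsilon>'"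
    using tail[OF \<epsilon>'] by auto
  obtain \<delta> where \<delta>: "\<delta> > 0" and eq: "\<And>n s t. real m \<le> real n \<Longrightarrow> s \<in> {- real m..0} \<Longrightarrow> t \<in> {- real m..0}
      \<Longrightarrow> \<bar>t - s\<bar> < \<delta> \<Longrightarrow> norm (U n t - U n s) \<le> \<epsilon>'"
    using equicont[OF \<epsilon>', of "real m"] by auto
  obtain K where K: "inverse (real (Suc K)) < \<delta>" using reals_Archimedean[OF \<delta>] by blast
  define \<eta> where "\<eta> = \<epsilon>' / (2 * (real M + 1))"
  have \<eta>: "\<eta> > 0" using \<epsilon>' by (simp add: \<eta>_def)
  define G where "G = {..m * Suc K} \<times> {..<M}"
  have G: "finite G" by (simp add: G_def)
  define l where "l = (\<lambda>(j, k). lim (\<lambda>n. U (r n) (gp j K) \<bullet> e k))"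
  have ev: "eventually (\<lambda>n. \<forall>y\<in>G. \<bar>(case y of (j, k) \<Rightarrow> U (r n) (gp j K) \<bullet> e k) - l y\<bar> < \<eta>) sequentially"
  proof (rule eventually_ball_finite[OF G], rule ballI)
    fix y assume "y \<in> G"
    obtain j k where y: "y = (j, k)" by (cases y) auto
    have "(\<lambda>n. U (r n) (gp j K) \<bullet> e k) \<longlonglongrightarrow> l y"
      unfolding y l_def using conv[of j K k] by (simp add: convergent_LIMSEQ_iff)
    then have "eventually (\<lambda>n. dist (U (r n) (gp j K) \<bullet> e k) (l y) < \<eta>) sequentially"
      using \<eta> by (rule tendstoD)
    then show "eventually (\<lambda>n. \<bar>(case y of (j, k) \<Rightarrow> U (r n) (gp j K) \<bullet> e k) - l y\<bar> < \<eta>) sequentially"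
      by (simp add: y dist_real_def)
  qed
  then obtain L0 where L0: "\<And>n y. n \<ge> L0 \<Longrightarrow> y \<in> G \<Longrightarrow> \<bar>(case y of (j, k) \<Rightarrow> U (r n) (gp j K) \<bullet> e k) - l y\<bar> < \<eta>"
    unfolding eventually_sequentially by blast
  define L where "L = max L0 m"
  show ?thesis
  proof (intro exI[of _ L] allI impI)
    fix a b x assume a: "L \<le> a" and b: "L \<le> b" and x: "x \<in> {- real m..0}"
    obtain j where j: "j \<le> m * Suc K" and d: "gp j K \<in> {- real m..0}" and xd: "\<bar>x - gp j K\<bar> < 1 / real (Suc K)"
      using grid_close[OF x] by blast
    define d where "d = gp j K"
    have xd': "\<bar>x - d\<bar> < \<delta>" using xd K by (simp add: d_def inverse_eq_divide)
    have ra: "real m \<le> real (r a)" and rb: "real m \<le> real (r b)"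
      using seq_suble[OF r, of a] seq_suble[OF r, of b] a b by (auto simp: L_def)
    have dna: "d \<in> {- real (r a)..0}" and dnb: "d \<in> {- real (r b)..0}"
      using d ra rb by (auto simp: d_def)
    have A: "norm (U (r a) x - U (r a) d) \<le> \<epsilon>'" using eq[OF ra d[folded d_def] x] xd' by (simp add: abs_minus_commute)
    have Bb: "norm (U (r b) d - U (r b) x) \<le> \<epsilon>'" using eq[OF rb x d[folded d_def]] xd' by simp
    define w where "w = U (r a) d - U (r b) d"
    have coords: "\<bar>w \<bullet> e k\<bar> \<le> 2 * \<eta>" if k: "k < M" for k
    proof -
      have yG: "(j, k) \<in> G" using j k by (simp add: G_def)
      have "\<bar>U (r a) d \<bullet> e k - l (j, k)\<bar> < \<eta>" using L0[OF _ yG, of a] a by (simp add: L_def d_def)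
      moreover have "\<bar>U (r b) d \<bullet> e k - l (j, k)\<bar> < \<eta>" using L0[OF _ yG, of b] b by (simp add: L_def d_def)
      ultimately show ?thesis by (simp add: w_def inner_diff_left)
    qed
    have "norm (Pproj e M w) \<le> (\<Sum>k<M. \<bar>w \<bullet> e k\<bar>)" by (rule P_norm_sum)
    also have "\<dots> \<le> (\<Sum>k<M. 2 * \<eta>)" by (rule sum_mono) (use coords in auto)
    also have "\<dots> = real M * (2 * \<eta>)" by simp
    also have "\<dots> \<le> \<epsilon>'"
    proof -
      have "real M * (2 * \<eta>) = \<epsilon>' * (real M / (real M + 1))" by (simp add: \<eta>_def field_simps)
      also have "\<dots> \<le> \<epsilon>' * 1" using \<epsilon>' by (intro mult_left_mono) auto
      finally show ?thesis by simp
    qed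
    finally have Pw: "norm (Pproj e M w) \<le> \<epsilon>'" .
    have Qw: "norm (Qproj e M w) \<le> 2 * \<epsilon>'"
    proof -
      have "norm (Qproj e M w) \<le> norm (Qproj e M (U (r a) d)) + norm (Qproj e M (U (r b) d))"
        unfolding w_def Q_diff by (rule norm_triangle_ineq4)
      also have "\<dots> \<le> 2 * \<epsilon>'" using tl[OF dna] tl[OF dnb] by simp
      finally show ?thesis .
    qed
    have W: "norm w \<le> 3 * \<epsilon>'"
      using norm_triangle_ineq[of "Pproj e M w" "Qproj e M w"] Pw Qw by (simp add: PQ_sum)
    have "U (r a) x - U (r b) x = (U (r a) x - U (r a) d) + w + (U (r b) d - U (r b) x)"
      by (simp add: w_def)
    then have "norm (U (r a) x - U (r b) x) \<le> norm (U (r a) x - U (r a) d) + norm w + norm (U (r b) d - U (r b) x)"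
      by (simp only:) (rule norm_triangle_le[OF add_mono[OF norm_triangle_ineq order_refl]])
    also have "\<dots> \<le> 5 * \<epsilon>'" using A W Bb by simp
    also have "\<dots> < \<epsilon>" using \<epsilon> by (simp add: \<epsilon>'_def)
    finally show "dist (U (r a) x) (U (r b) x) < \<epsilon>" by (simp add: dist_norm)
  qed
qed

end


context ctx begin

lemma limit_exists:
  obtains r u where "strict_mono r" "\<And>m::nat. uniform_limit {- real m..0} (\<lambda>n. U (r n)) u sequentially"
proof -
  obtain r where r: "strict_mono r" and conv: "\<And>j K k. convergent (\<lambda>n. U (r n) (gp j K) \<bullet> e k)"
    using extract_sub by blast
  define u where "u t = lim (\<lambda>n. U (r n) t)" for t
  have "uniform_limit {- real m..0} (\<lambda>n. U (r n)) u sequentially" for m :: nat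
  proof -
    have "\<exists>l. \<forall>e>0. \<exists>N. \<forall>n x. N \<le> n \<and> x \<in> {- real m..0} \<longrightarrow> dist (U (r n) x) (l x) < e"
      unfolding uniformly_convergent_eq_cauchy
    proof (intro allI impI)
      fix e :: real assume "e > 0"
      then obtain L where L: "\<forall>a b x. L \<le> a \<longrightarrow> L \<le> b \<longrightarrow> x \<in> {- real m..0} \<longrightarrow> dist (U (r a) x) (U (r b) x) < e"
        using ucauchy[OF r conv, of e m] by blast
      then show "\<exists>N. \<forall>a b x. N \<le> a \<and> N \<le> b \<and> x \<in> {- real m..0} \<longrightarrow> dist (U (r a) x) (U (r b) x) < e"
        by blast
    qed
    then obtain l where l: "\<And>e. e > 0 \<Longrightarrow> \<exists>N. \<forall>n x. N \<le> n \<and> x \<in> {- real m..0} \<longrightarrow> dist (U (r n) x) (l x) < e"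
      by blast
    have ul: "uniform_limit {- real m..0} (\<lambda>n. U (r n)) l sequentially"
      unfolding uniform_limit_sequentially_iff using l by blast
    have "l x = u x" if x: "x \<in> {- real m..0}" for x
    proof -
      have "(\<lambda>n. U (r n) x) \<longlonglongrightarrow> l x" by (rule tendsto_uniform_limitI[OF ul x])
      then show ?thesis unfolding u_def by (simp add: limI)
    qed
    then show ?thesis
      using ul unfolding uniform_limit_sequentially_iff by simp
  qed
  then show ?thesis using that r by blast
qed

lemma compact_sub:
  assumes "compact K" "K \<subseteq> {..0}"
  obtains m :: nat where "K \<subseteq> {- real m..0}"
proof -
  obtain b where b: "\<And>x. x \<in> K \<Longrightarrow> norm x \<le> b"
    using compact_imp_bounded[OF assms(1)] unfolding bounded_iff by blast
  have "K \<subseteq> {- real (nat \<lceil>b\<rceil>)..0}"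
  proof
    fix x assume x: "x \<in> K"
    have "- x \<le> b" using b[OF x] by simp
    also have "b \<le> real (nat \<lceil>b\<rceil>)" by linarith
    finally show "x \<in> {- real (nat \<lceil>b\<rceil>)..0}" using x assms(2) by auto
  qed
  then show ?thesis using that by blast
qed

lemma point_sub: "(x::real) \<le> 0 \<Longrightarrow> x \<in> {- real (nat \<lceil>- x\<rceil>)..0}"
  by auto linarith

lemma main:
  "\<exists>r p q. strict_mono r \<and>
     (\<forall>K. compact K \<and> K \<subseteq> {..0} \<longrightarrow>
        uniform_limit K (\<lambda>k. pn (r k)) p sequentially \<and>
        uniform_limit K (\<lambda>k. qn (r k)) q sequentially) \<and>
     mild_solution e lam F {..0} (\<lambda>t. p t + q t) \<and>
     (\<forall>t\<le>0. Pproj e N (p t + q t) = p t \<and> Qproj e N (p t + q t) = q t) \<and>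
     bounded (q ` {..0}) \<and>
     ((\<lambda>k. pn (r k) 0) \<longlonglongrightarrow> p 0) \<and>
     ((\<lambda>k. qn (r k) 0) \<longlonglongrightarrow> q 0)"
proof -
  obtain r u where r: "strict_mono r" and ul: "\<And>m::nat. uniform_limit {- real m..0} (\<lambda>n. U (r n)) u sequentially"
    using limit_exists by blast
  define p where "p t = Pproj e N (u t)" for t
  define q where "q t = Qproj e N (u t)" for t
  have pq: "(\<lambda>t. p t + q t) = u" by (simp add: p_def q_def PQ_sum)
  have rge: "n \<le> r n" for n by (rule seq_suble[OF r])
  have ptw: "(\<lambda>n. U (r n) x) \<longlonglongrightarrow> u x" if x: "x \<le> 0" for x
    by (rule tendsto_uniform_limitI[OF ul point_sub[OF x]])
  have ulim_proj: "uniform_limit K (\<lambda>k. pn (r k)) p sequentially \<and> uniform_limit K (\<lambda>k. qn (r k)) q sequentially"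
    if K: "compact K" "K \<subseteq> {..0}" for K
  proof -
    obtain m :: nat where Km: "K \<subseteq> {- real m..0}" using compact_sub[OF K] by blast
    have main: "\<exists>N. \<forall>n\<ge>N. \<forall>x\<in>K. dist (pn (r n) x) (p x) < \<epsilon> \<and> dist (qn (r n) x) (q x) < \<epsilon>"
      if \<epsilon>: "\<epsilon> > 0" for \<epsilon>
    proof -
      obtain N0 where N0: "\<And>n x. n \<ge> N0 \<Longrightarrow> x \<in> {- real m..0} \<Longrightarrow> dist (U (r n) x) (u x) < \<epsilon>"
        using ul[of m, unfolded uniform_limit_sequentially_iff, rule_format, OF \<epsilon>] by blast
      show ?thesis
      proof (intro exI[of _ "max N0 m"] allI impI ballI conjI)
        fix n x assume n: "max N0 m \<le> n" and x: "x \<in> K"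
        have xm: "x \<in> {- real m..0}" using x Km by blast
        have xn: "x \<in> {- real (r n)..0}" using xm rge[of n] n by auto
        have d: "norm (U (r n) x - u x) < \<epsilon>" using N0[OF _ xm, of n] n by (simp add: dist_norm)
        have "dist (pn (r n) x) (p x) = norm (Pproj e N (U (r n) x - u x))"
          using UP[OF xn] by (simp add: dist_norm p_def P_diff)
        also have "\<dots> \<le> norm (U (r n) x - u x)" by (rule P_norm)
        finally show "dist (pn (r n) x) (p x) < \<epsilon>" using d by linarith
        have "dist (qn (r n) x) (q x) = norm (Qproj e N (U (r n) x - u x))"
          by (simp add: dist_norm q_def Q_diff UQ[OF xn])
        also have "\<dots> \<le> norm (U (r n) x - u x)" by (rule Q_norm)
        finally show "dist (qn (r n) x) (q x) < \<epsilon>" using d by linarith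
      qed
    qed
    show ?thesis unfolding uniform_limit_sequentially_iff using main by meson
  qed
  have cont: "continuous_on {..0} u"
  proof -
    have cm: "continuous_on {- real m..0} u" for m :: nat
    proof (rule uniform_limit_theorem[OF _ ul[of m]])
      have "eventually (\<lambda>n. n \<ge> m) sequentially" by (rule eventually_ge_at_top)
      then show "\<forall>\<^sub>F n in sequentially. continuous_on {- real m..0} (U (r n))"
      proof eventually_elim
        case (elim n)
        have sub: "{- real m..0} \<subseteq> {- real (r n)..0}" using rge[of n] elim by auto
        show ?case unfolding U_def
          by (intro continuous_on_add continuous_on_subset[OF pn_cont sub] continuous_on_subset[OF qn_cont sub])
      qed
    qed simp
    show ?thesis
      unfolding continuous_on_eq_continuous_within
    proof
      fix t :: real assume "t \<in> {..0}"
      define m where "m = nat \<lceil>1 - t\<rceil>"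
      have tm: "- real m < t" unfolding m_def by linarith
      have "at t within {..0} = at t within {- real m..0}"
        by (rule at_within_nhd[of _ "{- real m<..}"]) (use tm in auto)
      moreover have "continuous (at t within {- real m..0}) u"
        using cm[of m] \<open>t \<in> {..0}\<close> tm unfolding continuous_on_eq_continuous_within by auto
      ultimately show "continuous (at t within {..0}) u" by simp
    qed
  qed
  have integ: "((\<lambda>\<tau>. S (t - \<tau>) (F (u \<tau>))) has_integral (u t - S (t - s) (u s))) {s..t}"
    if s: "s \<in> {..0}" and t: "t \<in> {..0}" and st: "s \<le> t" for s t
  proof -
    define m where "m = nat \<lceil>- s\<rceil>"
    have sm: "s \<in> {- real m..0}" using s unfolding m_def by auto linarith
    have tm: "t \<in> {- real m..0}" using sm t st by auto
    have sub: "{s..t} \<subseteq> {- real m..0}" using sm tm by auto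
    have ns: "s \<in> {- real (r (k + m))..0}" and nt: "t \<in> {- real (r (k + m))..0}" for k
      using sm tm rge[of "k + m"] by auto
    show ?thesis
    proof (rule has_integral_uniform_limit_real[where f = "\<lambda>k \<tau>. S (t - \<tau>) (F (U (r (k + m)) \<tau>))"
          and I = "\<lambda>k. U (r (k + m)) t - S (t - s) (U (r (k + m)) s)"])
      show "((\<lambda>\<tau>. S (t - \<tau>) (F (U (r (k + m)) \<tau>))) has_integral (U (r (k + m)) t - S (t - s) (U (r (k + m)) s))) {s..t}" for k
        by (rule EU[OF ns nt st])
      fix \<epsilon> :: real assume \<epsilon>: "\<epsilon> > 0"
      then have \<epsilon>': "\<epsilon> / K1 > 0" using K1_pos by simp
      obtain M where M: "\<And>n x. n \<ge> M \<Longrightarrow> x \<in> {- real m..0} \<Longrightarrow> dist (U (r n) x) (u x) < \<epsilon> / K1"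
        using ul[of m, unfolded uniform_limit_sequentially_iff, rule_format, OF \<epsilon>'] by blast
      show "\<exists>M. \<forall>k\<ge>M. \<forall>x\<in>{s..t}. norm (S (t - x) (F (U (r (k + m)) x)) - S (t - x) (F (u x))) \<le> \<epsilon>"
      proof (intro exI[of _ M] allI impI ballI)
        fix k x assume k: "M \<le> k" and x: "x \<in> {s..t}"
        have h: "t - x \<ge> 0" using x by simp
        have "norm (S (t - x) (F (U (r (k + m)) x)) - S (t - x) (F (u x)))
            = norm (S (t - x) (F (U (r (k + m)) x) - F (u x)))" by (simp add: sg_diff[OF h])
        also have "\<dots> \<le> norm (F (U (r (k + m)) x) - F (u x))" by (rule sg_norm[OF h])
        also have "\<dots> \<le> K1 * norm (U (r (k + m)) x - u x)" by (rule F_lip)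
        also have "\<dots> \<le> K1 * (\<epsilon> / K1)"
          using M[of "k + m" x] k sub x K1_pos by (intro mult_left_mono) (auto simp: dist_norm)
        also have "\<dots> = \<epsilon>" using K1_pos by simp
        finally show "norm (S (t - x) (F (U (r (k + m)) x)) - S (t - x) (F (u x))) \<le> \<epsilon>" .
      qed
    next
      have lt: "(\<lambda>k. U (r (k + m)) t) \<longlonglongrightarrow> u t"
        using LIMSEQ_ignore_initial_segment[OF ptw[of t], of m] t by simp
      have ls: "(\<lambda>k. U (r (k + m)) s) \<longlonglongrightarrow> u s"
        using LIMSEQ_ignore_initial_segment[OF ptw[of s], of m] s by simp
      have "(\<lambda>k. S (t - s) (U (r (k + m)) s)) \<longlonglongrightarrow> S (t - s) (u s)"
        using st by (intro bounded_linear.tendsto[OF bl_S ls]) simp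
      then show "(\<lambda>k. U (r (k + m)) t - S (t - s) (U (r (k + m)) s)) \<longlonglongrightarrow> u t - S (t - s) (u s)"
        by (intro tendsto_diff lt)
    qed
  qed
  have mild: "mild_solution e lam F {..0} u"
    unfolding mild_solution_def using cont integ by blast
  have qbd: "norm (q t) \<le> K0 / lam N" if t: "t \<le> 0" for t
  proof (rule tendsto_upperbound)
    show "(\<lambda>n. norm (Qproj e N (U (r n) t))) \<longlonglongrightarrow> norm (q t)"
      unfolding q_def by (intro tendsto_norm bounded_linear.tendsto[OF bl_Q] ptw t)
    have "eventually (\<lambda>n. n \<ge> nat \<lceil>- t\<rceil>) sequentially" by (rule eventually_ge_at_top)
    then show "\<forall>\<^sub>F n in sequentially. K0 / lam N \<ge> norm (Qproj e N (U (r n) t))"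
    proof eventually_elim
      case (elim n)
      have tn: "t \<in> {- real (r n)..0}" using point_sub[OF t] rge[of n] elim by auto
      show ?case using Bq[OF tn] UQ[OF tn] by simp
    qed
  qed simp
  have bq: "bounded (q ` {..0})"
    unfolding bounded_iff using qbd by auto
  have z: "0 \<in> {- real n..0}" for n by simp
  have p0lim: "(\<lambda>k. pn (r k) 0) \<longlonglongrightarrow> p 0"
    unfolding p_def UP[OF z, symmetric] by (intro bounded_linear.tendsto[OF bl_P] ptw) simp
  have q0lim: "(\<lambda>k. qn (r k) 0) \<longlonglongrightarrow> q 0"
    unfolding q_def UQ[OF z, symmetric] by (intro bounded_linear.tendsto[OF bl_Q] ptw) simp
  show ?thesis
    apply (rule exI[of _ r], rule exI[of _ p], rule exI[of _ q])
    using r ulim_proj mild bq p0lim q0lim unfolding pq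
    by (simp add: p_def q_def PQ_sum)
qed

end

theorem lemma2p2:
  fixes e :: "nat \<Rightarrow> 'a::{real_inner,complete_space}"
    and lam :: "nat \<Rightarrow> real" and N :: nat
    and F :: "'a \<Rightarrow> 'a" and K0 K1 R :: real
    and p0 :: 'a and pn qn :: "nat \<Rightarrow> real \<Rightarrow> 'a"
  assumes "spectral_data e lam N"
    and "nonlinearity lam N F K0 K1 R"
    and "Pproj e N p0 = p0"
    and "\<And>n. mild_solution_PQ e lam N F {- real n..0} (pn n) (qn n)"
    and "\<And>n. pn n 0 = p0"
    and "\<And>n. qn n (- real n) = 0"
  shows "\<exists>r p q. strict_mono r \<and>
     (\<forall>K. compact K \<and> K \<subseteq> {..0} \<longrightarrow>
        uniform_limit K (\<lambda>k. pn (r k)) p sequentially \<and>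
        uniform_limit K (\<lambda>k. qn (r k)) q sequentially) \<and>
     mild_solution e lam F {..0} (\<lambda>t. p t + q t) \<and>
     (\<forall>t\<le>0. Pproj e N (p t + q t) = p t \<and> Qproj e N (p t + q t) = q t) \<and>
     bounded (q ` {..0}) \<and>
     ((\<lambda>k. pn (r k) 0) \<longlonglongrightarrow> p 0) \<and>
     ((\<lambda>k. qn (r k) 0) \<longlonglongrightarrow> q 0)"
proof -
  interpret ctx e lam N F K0 K1 R p0 pn qn
  proof (unfold_locales)
    show "orthonormal_basis e" using assms(1) unfolding spectral_data_def by blast
  qed (use assms in auto)
  show ?thesis by (rule main)
qed

end
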